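(* Let $m\ge n$, let $\mathcal{U}\subseteq\mathbb{R}$, and let $F:\mathcal{U}\rightarrow M_{m\times n}(\mathbb{C})$ be defined by $F(x)=\sum_{k=0}^{p}A_k x^k$, where $A_k\in M_{m\times n}(\mathbb{C})$ for $k=0,1,\dots,p$. Let $\mathcal{Y}(\mathcal{U})=\{x\in\mathcal{U} : F(x)\text{ has repeated singular values}\}$. Then either $\mathcal{Y}(\mathcal{U})=\mathcal{U}$ or $\mathcal{Y}(\mathcal{U})$ is finite.
   Context: $M_{m\times n}(\mathbb{C})$ denotes the set of $m\times n$ complex matrices; throughout $m\ge n$. The singular values of $A\in M_{m\times n}(\mathbb{C})$ are the $n$ nonnegative square roots of the eigenvalues of $A^{\ast}A$, counted with multiplicity; $A$ has repeated singular values if two of these $n$ values coincide. *)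

theory Defs
  imports "Jordan_Normal_Form.Char_Poly" "HOL-Computational_Algebra.Polynomial"
begin

definition conj_transpose :: "complex mat \<Rightarrow> complex mat" where
  "conj_transpose A = mat (dim_col A) (dim_row A) (\<lambda>(i,j). cnj (A $$ (j,i)))"

definition singular_values :: "complex mat \<Rightarrow> real multiset" where
  "singular_values A =
     image_mset (\<lambda>z. sqrt (Re z)) (proots (char_poly (conj_transpose A * A)))"

definition has_repeated_singular_values :: "complex mat \<Rightarrow> bool" where
  "has_repeated_singular_values A \<longleftrightarrow> (\<exists>s. count (singular_values A) s \<ge> 2)"

definition mat_poly_eval :: "nat \<Rightarrow> nat \<Rightarrow> (nat \<Rightarrow> complex mat) \<Rightarrow> nat \<Rightarrow> real \<Rightarrow> complex mat" where
  "mat_poly_eval m n A p x =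
     mat m n (\<lambda>(i,j). \<Sum>k=0..p. A k $$ (i,j) * complex_of_real x ^ k)"

end

theory Submission imports Defs "HOL-Computational_Algebra.Field_as_Ring" "Subresultants.Subresultant_Gcd" "HOL-Computational_Algebra.Fundamental_Theorem_Algebra" begin

lemma ct_carrier: "B \<in> carrier_mat m n \<Longrightarrow> conj_transpose B \<in> carrier_mat n m"
  by (auto simp: conj_transpose_def)

lemma cnj_mult_self: "cnj a * a = complex_of_real ((cmod a)^2)"
  by (subst complex_norm_square) (rule mult.commute)

lemma herm_real:
  fixes B :: "complex mat"
  assumes B: "B \<in> carrier_mat m n"
    and z: "poly (char_poly (conj_transpose B * B)) z = 0"
  shows "Im z = 0"
proof -
  let ?M = "conj_transpose B * B"
  have M: "?M \<in> carrier_mat n n" using B by (auto simp: conj_transpose_def)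
  have "eigenvalue ?M z" using eigenvalue_root_char_poly[OF M] z by simp
  then obtain v where v: "v \<in> carrier_vec n" "v \<noteq> 0\<^sub>v n" "?M *\<^sub>v v = z \<cdot>\<^sub>v v"
    unfolding eigenvalue_def eigenvector_def using M by auto
  define w where "w r = (\<Sum>j<n. B $$ (r,j) * v $ j)" for r
  have Mv: "(?M *\<^sub>v v) $ i = (\<Sum>j<n. (\<Sum>r<m. cnj (B $$ (r,i)) * B $$ (r,j)) * v $ j)" if i: "i < n" for i
    using B v(1) i by (auto simp: conj_transpose_def scalar_prod_def lessThan_atLeast0 intro!: sum.cong)
  have "(\<Sum>i<n. cnj (v $ i) * (?M *\<^sub>v v) $ i) = (\<Sum>i<n. \<Sum>j<n. \<Sum>r<m. cnj (v $ i) * cnj (B $$ (r,i)) * B $$ (r,j) * v $ j)"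
    by (simp add: Mv sum_distrib_left sum_distrib_right mult_ac)
  also have "\<dots> = (\<Sum>r<m. \<Sum>i<n. \<Sum>j<n. cnj (v $ i) * cnj (B $$ (r,i)) * B $$ (r,j) * v $ j)"
    by (simp add: sum.swap[of _ "{..<m}"])
  also have "\<dots> = (\<Sum>r<m. cnj (w r) * w r)"
  proof (rule sum.cong[OF refl])
    fix r
    have "cnj (w r) * w r = (\<Sum>i<n. \<Sum>j<n. cnj (B $$ (r,i) * v $ i) * (B $$ (r,j) * v $ j))"
      unfolding w_def cnj_sum sum_product ..
    then show "(\<Sum>i<n. \<Sum>j<n. cnj (v $ i) * cnj (B $$ (r,i)) * B $$ (r,j) * v $ j) = cnj (w r) * w r"
      by (simp add: mult_ac)
  qed
  also have "\<dots> = of_real (\<Sum>r<m. (cmod (w r))^2)"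
    unfolding of_real_sum by (rule sum.cong[OF refl], rule cnj_mult_self)
  finally have e1: "(\<Sum>i<n. cnj (v $ i) * (?M *\<^sub>v v) $ i) = of_real (\<Sum>r<m. (cmod (w r))^2)" .
  have "(\<Sum>i<n. cnj (v $ i) * (?M *\<^sub>v v) $ i) = z * (\<Sum>i<n. cnj (v $ i) * v $ i)"
    using v(1) by (simp add: v(3) sum_distrib_left mult_ac)
  also have "\<dots> = z * of_real (\<Sum>i<n. (cmod (v $ i))^2)"
    unfolding of_real_sum sum_distrib_left by (rule sum.cong[OF refl], simp only: cnj_mult_self)
  finally have e2: "(\<Sum>i<n. cnj (v $ i) * (?M *\<^sub>v v) $ i) = z * of_real (\<Sum>i<n. (cmod (v $ i))^2)" .
  obtain i where i: "i < n" "v $ i \<noteq> 0" using v(1,2) by (auto simp: vec_eq_iff)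
  have pos: "(\<Sum>i<n. (cmod (v $ i))^2) > 0"
    by (rule sum_pos2[of _ i]) (use i in auto)
  define a where "a = (\<Sum>r<m. (cmod (w r))^2)"
  define b where "b = (\<Sum>i<n. (cmod (v $ i))^2)"
  have "z * of_real b = of_real a" using e1 e2 unfolding a_def b_def by simp
  moreover have "b > 0" using pos unfolding b_def by simp
  then have "complex_of_real b \<noteq> 0" by simp
  ultimately have "z = of_real a / of_real b" by (simp add: eq_divide_eq)
  then show ?thesis by (simp add: Im_divide)
qed

lemma res_zero_iff:
  fixes c :: "complex poly"
  assumes c0: "c \<noteq> 0"
  shows "resultant c (pderiv c) = 0 \<longleftrightarrow> (\<exists>z. count (proots c) z \<ge> 2)"
proof -
  let ?g = "gcd c (pderiv c)"
  have "resultant c (pderiv c) = 0 \<longleftrightarrow> degree ?g \<noteq> 0" by (rule resultant_0_gcd)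
  also have "\<dots> \<longleftrightarrow> (\<exists>z. poly c z = 0 \<and> poly (pderiv c) z = 0)"
  proof
    assume "degree ?g \<noteq> 0"
    then have "\<not> constant (poly ?g)" by (simp add: constant_degree)
    then obtain z where z: "poly ?g z = 0" using fundamental_theorem_of_algebra by blast
    have "?g dvd c" "?g dvd pderiv c" by auto
    moreover have "[:-z,1:] dvd ?g" using z by (simp add: poly_eq_0_iff_dvd)
    ultimately have "[:-z,1:] dvd c" "[:-z,1:] dvd pderiv c" by (auto intro: dvd_trans)
    then have "poly c z = 0" "poly (pderiv c) z = 0" by (simp_all add: poly_eq_0_iff_dvd)
    then show "\<exists>z. poly c z = 0 \<and> poly (pderiv c) z = 0" by blast
  next
    assume "\<exists>z. poly c z = 0 \<and> poly (pderiv c) z = 0"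
    then obtain z where "poly c z = 0" "poly (pderiv c) z = 0" by blast
    then have "[:-z,1:] dvd c" "[:-z,1:] dvd pderiv c" by (auto simp: poly_eq_0_iff_dvd)
    then have "[:-z,1:] dvd ?g" by auto
    moreover have "?g \<noteq> 0" using c0 by auto
    ultimately have "degree [:-z,1:] \<le> degree ?g" by (rule dvd_imp_degree_le)
    then show "degree ?g \<noteq> 0" by simp
  qed
  also have "\<dots> \<longleftrightarrow> \<not> rsquarefree c" by (simp add: rsquarefree_roots)
  also have "\<dots> \<longleftrightarrow> (\<exists>z. order z c \<ge> 2)"
  proof -
    have "\<And>a. (order a c = 0 \<or> order a c = 1) \<longleftrightarrow> \<not> order a c \<ge> 2" by auto
    then show ?thesis using c0 unfolding rsquarefree_def by auto
  qed
  also have "\<dots> \<longleftrightarrow> (\<exists>z. count (proots c) z \<ge> 2)" using c0 by simp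
  finally show ?thesis .
qed

lemma count_image_inj:
  assumes "inj_on f (set_mset M)" "z \<in># M"
  shows "count (image_mset f M) (f z) = count M z"
proof -
  have "f -` {f z} \<inter> set_mset M = {z}" using assms by (auto simp: inj_on_def)
  then show ?thesis by (simp add: count_image_mset)
qed

lemma rep_iff:
  fixes M :: "complex multiset"
  assumes "\<And>z. z \<in># M \<Longrightarrow> Im z = 0"
  shows "(\<exists>s. count (image_mset (\<lambda>z. sqrt (Re z)) M) s \<ge> 2) \<longleftrightarrow> (\<exists>z. count M z \<ge> 2)"
proof -
  have inj: "inj_on (\<lambda>z. sqrt (Re z)) (set_mset M)"
    using assms by (auto simp: inj_on_def complex_eq_iff)
  show ?thesis
  proof
    assume "\<exists>s. count (image_mset (\<lambda>z. sqrt (Re z)) M) s \<ge> 2"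
    then obtain s where s: "count (image_mset (\<lambda>z. sqrt (Re z)) M) s \<ge> 2" by blast
    then have "0 < count (image_mset (\<lambda>z. sqrt (Re z)) M) s" by linarith
    then have "s \<in># image_mset (\<lambda>z. sqrt (Re z)) M" by (simp only: count_greater_zero_iff)
    then obtain z where z: "z \<in># M" "s = sqrt (Re z)" by auto
    show "\<exists>z. count M z \<ge> 2" using s count_image_inj[OF inj z(1)] z(2) by auto
  next
    assume "\<exists>z. count M z \<ge> 2"
    then obtain z where z: "count M z \<ge> 2" by blast
    then have "z \<in># M" by (simp flip: count_greater_zero_iff)
    then have "count (image_mset (\<lambda>z. sqrt (Re z)) M) (sqrt (Re z)) \<ge> 2"
      using z count_image_inj[OF inj] by simp
    then show "\<exists>s. count (image_mset (\<lambda>z. sqrt (Re z)) M) s \<ge> 2" by blast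
  qed
qed

lemma key:
  fixes B :: "complex mat"
  assumes B: "B \<in> carrier_mat m n"
  shows "has_repeated_singular_values B \<longleftrightarrow>
     resultant (char_poly (conj_transpose B * B)) (pderiv (char_poly (conj_transpose B * B))) = 0"
proof -
  let ?c = "char_poly (conj_transpose B * B)"
  have M: "conj_transpose B * B \<in> carrier_mat n n" using B by (auto simp: conj_transpose_def)
  have c0: "?c \<noteq> 0" using degree_monic_char_poly[OF M] by auto
  have re: "Im z = 0" if "z \<in># proots ?c" for z
    using herm_real[OF B] that c0 by simp
  show ?thesis unfolding has_repeated_singular_values_def singular_values_def
    using rep_iff[OF re] res_zero_iff[OF c0] by (simp only:)
qed

definition Fp :: "nat \<Rightarrow> nat \<Rightarrow> (nat \<Rightarrow> complex mat) \<Rightarrow> nat \<Rightarrow> complex poly mat" where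
  "Fp m n A p = mat m n (\<lambda>(i,j). \<Sum>k=0..p. monom (A k $$ (i,j)) k)"

definition Fcp :: "nat \<Rightarrow> nat \<Rightarrow> (nat \<Rightarrow> complex mat) \<Rightarrow> nat \<Rightarrow> complex poly mat" where
  "Fcp m n A p = mat n m (\<lambda>(i,j). \<Sum>k=0..p. monom (cnj (A k $$ (j,i))) k)"

lemma eval_F: "map_mat (\<lambda>q. poly q (complex_of_real x)) (Fp m n A p) = mat_poly_eval m n A p x"
  by (auto simp: Fp_def mat_poly_eval_def poly_sum poly_monom intro!: eq_matI)

lemma eval_Fc: "map_mat (\<lambda>q. poly q (complex_of_real x)) (Fcp m n A p) = conj_transpose (mat_poly_eval m n A p x)"
  by (auto simp: Fcp_def conj_transpose_def mat_poly_eval_def poly_sum poly_monom cnj_sum intro!: eq_matI)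

lemma sh: "semiring_hom (\<lambda>q. poly q (a::complex))"
  by unfold_locales auto

lemma eval_res:
  fixes m n p :: nat and A :: "nat \<Rightarrow> complex mat" and x :: real
  defines "D \<equiv> resultant (char_poly (Fcp m n A p * Fp m n A p)) (pderiv (char_poly (Fcp m n A p * Fp m n A p)))"
  shows "has_repeated_singular_values (mat_poly_eval m n A p x) \<longleftrightarrow> poly D (complex_of_real x) = 0"
proof -
  let ?ev = "\<lambda>q. poly q (complex_of_real x)"
  let ?F = "mat_poly_eval m n A p x"
  let ?Gp = "Fcp m n A p * Fp m n A p"
  let ?chi = "char_poly ?Gp"
  have Fc: "?F \<in> carrier_mat m n" by (simp add: mat_poly_eval_def)
  have Gp: "?Gp \<in> carrier_mat n n" by (rule mult_carrier_mat) (auto simp: Fp_def Fcp_def)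
  have G: "map_mat ?ev ?Gp = conj_transpose ?F * ?F"
  proof -
    have c1: "Fcp m n A p \<in> carrier_mat n m" "Fp m n A p \<in> carrier_mat m n" by (auto simp: Fp_def Fcp_def)
    show ?thesis using semiring_hom.mat_hom_mult[OF sh[of "complex_of_real x"] c1]
      unfolding eval_F eval_Fc .
  qed
  have chi: "char_poly (conj_transpose ?F * ?F) = map_poly ?ev ?chi"
    using poly_hom.char_poly_hom[OF Gp, of "complex_of_real x"] G by simp
  have d1: "degree ?chi = n" using degree_monic_char_poly[OF Gp] by simp
  have M: "conj_transpose ?F * ?F \<in> carrier_mat n n" using Fc by (intro mult_carrier_mat ct_carrier)
  have d2: "degree (map_poly ?ev ?chi) = n" using degree_monic_char_poly[OF M] chi by simp
  have pd: "map_poly ?ev (pderiv ?chi) = pderiv (map_poly ?ev ?chi)" by (rule poly_hom.map_poly_pderiv)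
  have d3: "degree (pderiv (map_poly ?ev ?chi)) = n - 1" using d2 by (simp add: degree_pderiv)
  have "degree (map_poly ?ev (pderiv ?chi)) \<le> degree (pderiv ?chi)" by (rule degree_map_poly_le)
  moreover have "degree (pderiv ?chi) \<le> n - 1" using degree_pderiv_le[of ?chi] d1 by simp
  ultimately have d4: "degree (map_poly ?ev (pderiv ?chi)) = degree (pderiv ?chi)" using pd d3 by simp
  have "resultant (map_poly ?ev ?chi) (map_poly ?ev (pderiv ?chi)) = ?ev D"
    unfolding D_def by (rule poly_hom.resultant_map_poly) (use d1 d2 d4 in auto)
  then show ?thesis using key[OF Fc] chi pd by simp
qed

theorem theorem3p9:
  fixes m n p :: nat and U :: "real set" and A :: "nat \<Rightarrow> complex mat"
  assumes "n \<le> m"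
    and "\<forall>k\<le>p. A k \<in> carrier_mat m n"
  shows "{x \<in> U. has_repeated_singular_values (mat_poly_eval m n A p x)} = U
       \<or> finite {x \<in> U. has_repeated_singular_values (mat_poly_eval m n A p x)}"
proof -
  define D where "D = resultant (char_poly (Fcp m n A p * Fp m n A p)) (pderiv (char_poly (Fcp m n A p * Fp m n A p)))"
  have eq: "{x \<in> U. has_repeated_singular_values (mat_poly_eval m n A p x)} = {x \<in> U. poly D (complex_of_real x) = 0}"
    using eval_res[of m n A p] unfolding D_def by simp
  show ?thesis
  proof (cases "D = 0")
    case True
    then show ?thesis unfolding eq by simp
  next
    case False
    have "finite {z. poly D z = 0}" using False by (rule poly_roots_finite)
    then have "finite (complex_of_real -` {z. poly D z = 0})"
      by (rule finite_vimageI) (simp add: inj_on_def)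
    then have "finite {x \<in> U. poly D (complex_of_real x) = 0}"
      by (rule rev_finite_subset) auto
    then show ?thesis unfolding eq by simp
  qed
qed

end
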